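(* Let $q$ be a prime power, $s\geq 2$, $V=\mathbb{F}_{q^s}^3$, and let $W$ be an $(s+1)$-dimensional $\mathbb{F}_q$-subspace of $V$ such that $\mathcal{L}_W$ is a nontrivial blocking set of $\mathrm{PG}(2,q^s)$ (i.e. $\mathcal{L}_W$ is not a line) and $\mathcal{L}_W$ has a point of weight $s-1$. Then $\mathcal{L}_W$ is projectively equivalent to $\mathcal{L}_U$, where $U=\{(x,\mathrm{Tr}_{q^s/q}(x),y): x\in\mathbb{F}_{q^s},\ y\in\mathbb{F}_q\}$.
   Context: Points of $\mathrm{PG}(2,q^s)$ are the 1-dimensional $\mathbb{F}_{q^s}$-subspaces $\langle \vec v\rangle_{\mathbb{F}_{q^s}}$ of $V=\mathbb{F}_{q^s}^3$, and lines are the 2-dimensional $\mathbb{F}_{q^s}$-subspaces. For an $\mathbb{F}_q$-subspace $U$ of $V$, $\mathcal{L}_U=\{\langle \vec v\rangle_{\mathbb{F}_{q^s}} : \vec v\in U\setminus\{0\}\}$. The weight of a point $P=\langle\vec v\rangle_{\mathbb{F}_{q^s}}$ with respect to $\mathcal{L}_U$ is $\dim_{\mathbb{F}_q}(U\cap \langle\vec v\rangle_{\mathbb{F}_{q^s}})$. $\mathrm{Tr}_{q^s/q}(x)=x+x^q+\dots+x^{q^{s-1}}$. A blocking set is a point set meeting every line. *)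

theory Defs
  imports "HOL-Library.Product_Plus" "HOL-Library.Cardinality" "HOL-Computational_Algebra.Primes"
begin

type_synonym 'a vec3 = "'a \<times> 'a \<times> 'a"

definition smul :: "'a::times \<Rightarrow> 'a vec3 \<Rightarrow> 'a vec3" where
  "smul c v = (c * fst v, c * fst (snd v), c * snd (snd v))"

text \<open>The subfield F_q of a field of order q^s: the fixed points of x \<mapsto> x^q.\<close>
definition subfield_q :: "nat \<Rightarrow> 'a::field set" where
  "subfield_q q = {x. x ^ q = x}"

definition span_over :: "'a::field set \<Rightarrow> 'a vec3 set \<Rightarrow> 'a vec3 set" where
  "span_over K B = {v. \<exists>c. (\<forall>b\<in>B. c b \<in> K) \<and> v = (\<Sum>b\<in>B. smul (c b) b)}"

definition is_subspace :: "'a::field set \<Rightarrow> 'a vec3 set \<Rightarrow> bool" where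
  "is_subspace K U \<longleftrightarrow> 0 \<in> U \<and> (\<forall>u\<in>U. \<forall>v\<in>U. u + v \<in> U) \<and> (\<forall>c\<in>K. \<forall>u\<in>U. smul c u \<in> U)"

definition sub_dim :: "'a::field set \<Rightarrow> 'a vec3 set \<Rightarrow> nat" where
  "sub_dim K U = (LEAST d. \<exists>B. finite B \<and> B \<subseteq> U \<and> card B = d \<and> span_over K B = U)"

definition pt :: "'a::field vec3 \<Rightarrow> 'a vec3 set" where
  "pt v = span_over UNIV {v}"

definition linset :: "'a::field vec3 set \<Rightarrow> 'a vec3 set set" where
  "linset U = {pt v | v. v \<in> U \<and> v \<noteq> 0}"

definition weight :: "'a::field set \<Rightarrow> 'a vec3 set \<Rightarrow> 'a vec3 set \<Rightarrow> nat" where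
  "weight K U P = sub_dim K (U \<inter> P)"

definition is_line :: "'a::field vec3 set \<Rightarrow> bool" where
  "is_line l \<longleftrightarrow> is_subspace UNIV l \<and> sub_dim UNIV l = 2"

definition blocking_set :: "'a::field vec3 set set \<Rightarrow> bool" where
  "blocking_set S \<longleftrightarrow> (\<forall>l. is_line l \<longrightarrow> (\<exists>P\<in>S. P \<subseteq> l))"

definition trace :: "nat \<Rightarrow> nat \<Rightarrow> 'a::field \<Rightarrow> 'a" where
  "trace q s x = (\<Sum>i<s. x ^ (q ^ i))"

definition U_trace :: "nat \<Rightarrow> nat \<Rightarrow> 'a::field vec3 set" where
  "U_trace q s = {(x, trace q s x, y) | x y. y \<in> subfield_q q}"

definition proj_equiv :: "'a::field vec3 set set \<Rightarrow> 'a vec3 set set \<Rightarrow> bool" where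
  "proj_equiv S T \<longleftrightarrow> (\<exists>f. bij f \<and> (\<forall>u v. f (u + v) = f u + f v)
      \<and> (\<forall>c v. f (smul c v) = smul c (f v)) \<and> (\<lambda>P. f ` P) ` S = T)"

end

theory Submission
  imports Defs "HOL-Number_Theory.Residues" "HOL-Computational_Algebra.Polynomial"
begin


lemma pow_card_same:
  fixes x :: "'a::{field,finite}"
  shows "x ^ card (UNIV :: 'a set) = x"
proof (cases "x = 0")
  case False
  have "x * (\<Prod>y\<in>UNIV-{0}. x * y) = x * x ^ (card (UNIV :: 'a set) - 1) * \<Prod>(UNIV-{0})"
    by (simp add: prod.distrib mult_ac)
  also have "x * x ^ (card (UNIV :: 'a set) - 1) = x ^ Suc (card (UNIV :: 'a set) - 1)"
    by (subst power_Suc) auto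
  also have "Suc (card (UNIV :: 'a set) - 1) = card (UNIV :: 'a set)"
    using finite_UNIV_card_ge_0[where ?'a = 'a] by simp
  also have "(\<Prod>y\<in>UNIV-{0}. x * y) = (\<Prod>y\<in>UNIV-{0}. y)"
    by (rule prod.reindex_bij_witness[of _ "\<lambda>y. y / x" "\<lambda>y. x * y"]) (use False in auto)
  finally show ?thesis
    by simp
qed (use finite_UNIV_card_ge_0[where ?'a = 'a] in auto)

lemma char_q:
  assumes "prime p" "q = p ^ k" "CARD('a::{field,finite}) = q ^ s" "s \<ge> 1"
  shows "q = CHAR('a) ^ k"
proof -
  have pos: "CHAR('a) > 0" by (rule finite_imp_CHAR_pos) simp
  have pr: "prime CHAR('a)" using prime_CHAR_semidom[OF pos] .
  have "CHAR('a) dvd p ^ (k * s)" using CHAR_dvd_CARD[where 'a='a] assms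
    by (simp add: power_mult)
  hence "CHAR('a) dvd p" using pr prime_dvd_power_nat by blast
  hence "CHAR('a) = p" using pr assms(1) primes_dvd_imp_eq by blast
  thus ?thesis using assms by simp
qed

lemma frob_add:
  assumes "q = CHAR('a::{field,finite}) ^ k"
  shows "((x::'a) + y) ^ (q ^ i) = x ^ (q ^ i) + y ^ (q ^ i)"
proof -
  have pos: "CHAR('a) > 0" by (rule finite_imp_CHAR_pos) simp
  have pr: "prime CHAR('a)" using prime_CHAR_semidom[OF pos] .
  have "q ^ i = CHAR('a) ^ (k * i)" using assms by (simp add: power_mult)
  thus ?thesis using freshmans_dream'[OF pr] by simp
qed

lemma frob_sum:
  assumes "q = CHAR('a::{field,finite}) ^ k"
  shows "(sum (f :: 'b \<Rightarrow> 'a) A) ^ (q ^ i) = sum (\<lambda>j. f j ^ (q ^ i)) A"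
proof -
  have pos: "CHAR('a) > 0" by (rule finite_imp_CHAR_pos) simp
  have pr: "prime CHAR('a)" using prime_CHAR_semidom[OF pos] .
  have "q ^ i = CHAR('a) ^ (k * i)" using assms by (simp add: power_mult)
  thus ?thesis using freshmans_dream_sum'[OF pr] by simp
qed

definition is_sf :: "'a::field set \<Rightarrow> bool" where
  "is_sf K \<longleftrightarrow> 0 \<in> K \<and> 1 \<in> K \<and> (\<forall>x\<in>K. \<forall>y\<in>K. x + y \<in> K \<and> x * y \<in> K) \<and> (\<forall>x\<in>K. - x \<in> K \<and> inverse x \<in> K)"

lemma sf_UNIV: "is_sf UNIV" by (simp add: is_sf_def)

lemma sfq:
  assumes "q = CHAR('a::{field,finite}) ^ k" "q \<ge> 1"
  shows "is_sf (subfield_q q :: 'a set)"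
proof -
  have pos: "CHAR('a) > 0" by (rule finite_imp_CHAR_pos) simp
  have pr: "prime CHAR('a)" using prime_CHAR_semidom[OF pos] .
  have a: "((x::'a) + y) ^ q = x ^ q + y ^ q" for x y
    using frob_add[OF assms(1), of x y 1] by simp
  have m: "(- (x::'a)) ^ q = - (x ^ q)" for x
  proof -
    have "(x + - x) ^ q = x ^ q + (- x) ^ q" by (rule a)
    hence "x ^ q + (- x) ^ q = 0" using assms(2) by (simp add: power_0_left)
    thus ?thesis by (simp add: add_eq_0_iff)
  qed
  have z: "(0::'a) ^ q = 0" using assms(2) by (simp add: power_0_left)
  have o: "(1::'a) ^ q = 1" by simp
  have ml: "((x::'a) * y) ^ q = x ^ q * y ^ q" for x y by (rule power_mult_distrib)
  have iv: "(inverse (x::'a)) ^ q = inverse (x ^ q)" for x by (rule power_inverse)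
  show ?thesis unfolding is_sf_def subfield_q_def
    by (intro conjI ballI) (simp_all only: mem_Collect_eq z o a m ml iv)
qed

lemma sf_facts:
  assumes "is_sf K"
  shows "0 \<in> K" "1 \<in> K" "x \<in> K \<Longrightarrow> y \<in> K \<Longrightarrow> x + y \<in> K"
    "x \<in> K \<Longrightarrow> y \<in> K \<Longrightarrow> x * y \<in> K" "x \<in> K \<Longrightarrow> - x \<in> K"
    "x \<in> K \<Longrightarrow> inverse x \<in> K" "x \<in> K \<Longrightarrow> y \<in> K \<Longrightarrow> x - y \<in> K"
    "x \<in> K \<Longrightarrow> y \<in> K \<Longrightarrow> x / y \<in> K"
proof -
  have a: "0 \<in> K" "1 \<in> K" "\<And>x y. x \<in> K \<Longrightarrow> y \<in> K \<Longrightarrow> x + y \<in> K"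
    "\<And>x y. x \<in> K \<Longrightarrow> y \<in> K \<Longrightarrow> x * y \<in> K" "\<And>x. x \<in> K \<Longrightarrow> - x \<in> K"
    "\<And>x. x \<in> K \<Longrightarrow> inverse x \<in> K" using assms unfolding is_sf_def by blast+
  show "0 \<in> K" "1 \<in> K" by (fact a(1), fact a(2))
  show "x \<in> K \<Longrightarrow> y \<in> K \<Longrightarrow> x + y \<in> K" by (fact a(3))
  show "x \<in> K \<Longrightarrow> y \<in> K \<Longrightarrow> x * y \<in> K" by (fact a(4))
  show "x \<in> K \<Longrightarrow> - x \<in> K" by (fact a(5))
  show "x \<in> K \<Longrightarrow> inverse x \<in> K" by (fact a(6))
  show "x \<in> K \<Longrightarrow> y \<in> K \<Longrightarrow> x - y \<in> K" using a(3)[of x "- y"] a(5)[of y] by simp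
  show "x \<in> K \<Longrightarrow> y \<in> K \<Longrightarrow> x / y \<in> K" using a(4)[of x "inverse y"] a(6)[of y] by (simp add: divide_inverse)
qed


locale ffs =
  fixes q s k :: nat and TY :: "'a::{field,finite} itself"
  assumes qchar: "q = CHAR('a) ^ k" and k1: "k \<ge> 1" and s2: "s \<ge> 2" and cardF: "CARD('a) = q ^ s"
begin

abbreviation "K \<equiv> (subfield_q q :: 'a set)"
abbreviation "Tr \<equiv> (trace q s :: 'a \<Rightarrow> 'a)"

lemma q2: "q \<ge> 2"
proof -
  have pos: "CHAR('a) > 0" by (rule finite_imp_CHAR_pos) simp
  have pr: "prime CHAR('a)" using prime_CHAR_semidom[OF pos] .
  hence "CHAR('a) \<ge> 2" by (simp add: prime_ge_2_nat)
  hence "CHAR('a) ^ k \<ge> 2 ^ k" by (simp add: power_mono)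
  moreover have "(2::nat) ^ k \<ge> 2" using k1
    by (metis power_one_right power_increasing_iff one_less_numeral_iff semiring_norm(76))
  ultimately show ?thesis using qchar by simp
qed

lemma sfK: "is_sf K" using sfq[OF qchar] q2 by simp

lemma pow_qs: "(x::'a) ^ (q ^ s) = x" using pow_card_same[of x] cardF by simp

lemma Kpow: "c \<in> K \<Longrightarrow> c ^ (q ^ i) = c"
proof (induction i)
  case (Suc i)
  have "c ^ (q ^ Suc i) = (c ^ (q ^ i)) ^ q" by (metis power_Suc2 power_mult)
  also have "\<dots> = c" using Suc by (simp add: subfield_q_def)
  finally show ?case .
qed simp

lemma tr_add: "Tr (x + y) = Tr x + Tr y"
  unfolding trace_def using frob_add[OF qchar] by (simp add: sum.distrib)

lemma tr_smul: "c \<in> K \<Longrightarrow> Tr (c * x) = c * Tr x"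
  unfolding trace_def by (simp add: power_mult_distrib Kpow sum_distrib_left)

lemma tr_K: "Tr x \<in> K"
proof -
  have "(Tr x) ^ q = (\<Sum>i<s. (x ^ (q ^ i)) ^ (q ^ 1))"
    unfolding trace_def using frob_sum[OF qchar, of "\<lambda>i. x ^ (q ^ i)" "{..<s}" 1] by simp
  also have "\<dots> = (\<Sum>i<s. x ^ (q ^ Suc i))"
    by (simp add: power_mult[symmetric] mult.commute)
  also have "\<dots> = Tr x"
  proof -
    have "(\<Sum>i<Suc s. x ^ (q ^ i)) = x ^ (q ^ 0) + (\<Sum>i<s. x ^ (q ^ Suc i))"
      by (rule sum.lessThan_Suc_shift)
    moreover have "(\<Sum>i<Suc s. x ^ (q ^ i)) = (\<Sum>i<s. x ^ (q ^ i)) + x ^ (q ^ s)" by simp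
    ultimately show ?thesis using pow_qs unfolding trace_def by (simp add: add.commute)
  qed
  finally show ?thesis by (simp add: subfield_q_def)
qed

lemma card_T: "card {x::'a. Tr x = 0} \<le> q ^ (s - 1)"
proof -
  define P :: "'a poly" where "P = (\<Sum>i<s. monom 1 (q ^ i))"
  have ev: "poly P x = Tr x" for x unfolding P_def trace_def by (simp add: poly_sum poly_monom)
  have inj: "q ^ i = q ^ j \<longleftrightarrow> i = j" for i j using q2 by (simp add: power_inject_exp)
  have "coeff P (q ^ (s - 1)) = (\<Sum>i<s. if i = s - 1 then 1 else 0)"
    unfolding P_def coeff_sum by (simp add: inj)
  also have "\<dots> = 1" using s2 by (simp add: sum.delta)
  finally have "P \<noteq> 0" by auto
  have "degree P \<le> q ^ (s - 1)" unfolding P_def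
  proof (rule degree_sum_le)
    fix i assume "i \<in> {..<s}"
    hence "q ^ i \<le> q ^ (s - 1)" using q2 by (intro power_increasing) auto
    thus "degree (monom (1::'a) (q ^ i)) \<le> q ^ (s - 1)" using degree_monom_le order_trans by blast
  qed simp
  moreover have "card {x. poly P x = 0} \<le> degree P" by (rule card_poly_roots_bound) fact
  ultimately show ?thesis by (simp add: ev)
qed

lemma card_K_le: "card K \<le> q"
proof -
  define P :: "'a poly" where "P = monom 1 q - monom 1 1"
  have ev: "poly P x = x ^ q - x" for x unfolding P_def by (simp add: poly_monom)
  have "coeff P q = 1" unfolding P_def using q2 by simp
  hence "P \<noteq> 0" by auto
  have "degree P \<le> q" unfolding P_def using q2
    by (meson degree_diff_le degree_monom_le le_trans one_le_numeral order.trans)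
  moreover have "card {x. poly P x = 0} \<le> degree P" by (rule card_poly_roots_bound) fact
  moreover have "K = {x. poly P x = 0}" by (auto simp: ev subfield_q_def)
  ultimately show ?thesis by simp
qed

end




lemma smul_add_r: "smul c (u + v) = smul c u + smul c (v::'a::field vec3)"
  by (simp add: smul_def algebra_simps prod_eq_iff)
lemma smul_add_l: "smul (a + b) u = smul a u + smul b (u::'a::field vec3)"
  by (simp add: smul_def algebra_simps prod_eq_iff)
lemma smul_smul: "smul a (smul b u) = smul (a * b) (u::'a::field vec3)"
  by (simp add: smul_def algebra_simps prod_eq_iff)
lemma smul_one[simp]: "smul 1 u = (u::'a::field vec3)"
  by (simp add: smul_def prod_eq_iff)
lemma smul_zero_l[simp]: "smul 0 u = (0::'a::field vec3)"
  by (simp add: smul_def prod_eq_iff)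
lemma smul_zero_r[simp]: "smul c 0 = (0::'a::field vec3)"
  by (simp add: smul_def prod_eq_iff)
lemma smul_neg_l: "smul (- a) u = - smul a (u::'a::field vec3)"
  by (simp add: smul_def prod_eq_iff)
lemma smul_diff_l: "smul (a - b) u = smul a u - smul b (u::'a::field vec3)"
  by (simp add: smul_def algebra_simps prod_eq_iff)
lemma smul_diff_r: "smul c (u - v) = smul c u - smul c (v::'a::field vec3)"
  by (simp add: smul_def algebra_simps prod_eq_iff)
lemma smul_neg_r: "smul c (- u) = - smul c (u::'a::field vec3)"
  by (simp add: smul_def prod_eq_iff)
lemma smul_eq_0: "smul c u = (0::'a::field vec3) \<longleftrightarrow> c = 0 \<or> u = 0"
  by (cases u) (auto simp: smul_def prod_eq_iff)
lemma smul_cancel: "u \<noteq> 0 \<Longrightarrow> smul a u = smul b (u::'a::field vec3) \<Longrightarrow> a = b"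
  using smul_eq_0[of "a - b" u] by (simp add: smul_diff_l)
lemma smul_sum: "smul c (sum f A) = (\<Sum>x\<in>A. smul c (f x :: 'a::field vec3))"
  by (induction A rule: infinite_finite_induct) (auto simp: smul_add_r)
lemma sum_smul_l: "smul (sum g A) u = (\<Sum>x\<in>A. smul (g x) (u :: 'a::field vec3))"
  by (induction A rule: infinite_finite_induct) (auto simp: smul_add_l)
lemma fst_smul[simp]: "fst (smul c v) = c * fst v" by (simp add: smul_def)

lemma sub_0: "is_subspace K E \<Longrightarrow> 0 \<in> E" by (simp add: is_subspace_def)
lemma sub_add: "is_subspace K E \<Longrightarrow> u \<in> E \<Longrightarrow> v \<in> E \<Longrightarrow> u + v \<in> E" by (simp add: is_subspace_def)
lemma sub_smul: "is_subspace K E \<Longrightarrow> c \<in> K \<Longrightarrow> u \<in> E \<Longrightarrow> smul c u \<in> E" by (simp add: is_subspace_def)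
lemma sub_neg: "is_sf K \<Longrightarrow> is_subspace K E \<Longrightarrow> u \<in> E \<Longrightarrow> - (u::'a::field vec3) \<in> E"
  using sub_smul[of K E "-1" u] sf_facts(2,5)[of K] by (simp add: smul_neg_l)
lemma sub_diff: "is_sf K \<Longrightarrow> is_subspace K E \<Longrightarrow> u \<in> E \<Longrightarrow> v \<in> E \<Longrightarrow> u - (v::'a::field vec3) \<in> E"
proof -
  assume a: "is_sf K" "is_subspace K E" "u \<in> E" "v \<in> E"
  have "u + - v \<in> E" by (rule sub_add[OF a(2) a(3) sub_neg[OF a(1) a(2) a(4)]])
  thus ?thesis by simp
qed
lemma sub_sum: "is_subspace K E \<Longrightarrow> (\<And>x. x \<in> A \<Longrightarrow> f x \<in> E) \<Longrightarrow> sum f A \<in> E"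
proof (induction A rule: infinite_finite_induct)
  case (insert x F) thus ?case by (simp add: sub_add)
qed (simp_all add: sub_0)

lemma span_sub: "is_subspace K E \<Longrightarrow> B \<subseteq> E \<Longrightarrow> span_over K B \<subseteq> (E::'a::field vec3 set)"
  unfolding span_over_def by (auto intro!: sub_sum sub_smul)

lemma span_is_sub: "is_sf K \<Longrightarrow> is_subspace K (span_over K (B::'a::field vec3 set))"
  unfolding is_subspace_def
proof (intro conjI ballI)
  assume K: "is_sf K"
  show "0 \<in> span_over K B" unfolding span_over_def
    by (rule CollectI, rule exI[of _ "\<lambda>_. 0"]) (simp add: sf_facts(1)[OF K])
  fix u v assume "u \<in> span_over K B" "v \<in> span_over K B"
  then obtain c d where c: "\<forall>b\<in>B. c b \<in> K" "u = (\<Sum>b\<in>B. smul (c b) b)"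
    and d: "\<forall>b\<in>B. d b \<in> K" "v = (\<Sum>b\<in>B. smul (d b) b)" unfolding span_over_def by blast
  show "u + v \<in> span_over K B" unfolding span_over_def
    by (rule CollectI, rule exI[of _ "\<lambda>b. c b + d b"])
      (simp add: c d sf_facts(3)[OF K] smul_add_l sum.distrib)
next
  fix a u assume K: "is_sf K" and a: "a \<in> K" and "u \<in> span_over K B"
  then obtain c where c: "\<forall>b\<in>B. c b \<in> K" "u = (\<Sum>b\<in>B. smul (c b) b)"
    unfolding span_over_def by blast
  show "smul a u \<in> span_over K B" unfolding span_over_def
    by (rule CollectI, rule exI[of _ "\<lambda>b. a * c b"])
      (simp add: c a sf_facts(4)[OF K] smul_sum smul_smul)
qed

lemma in_span: "is_sf K \<Longrightarrow> finite B \<Longrightarrow> b \<in> B \<Longrightarrow> b \<in> span_over K (B::'a::field vec3 set)"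
  unfolding span_over_def
proof (rule CollectI, rule exI[of _ "\<lambda>x. if x = b then 1 else 0"], intro conjI)
  assume "is_sf K" "finite B" "b \<in> B"
  thus "\<forall>x\<in>B. (if x = b then 1 else 0) \<in> K" by (simp add: sf_facts(1,2))
  have "(\<Sum>x\<in>B. smul (if x = b then 1 else 0) x) = (\<Sum>x\<in>B. if x = b then x else 0)"
    by (rule sum.cong) auto
  also have "\<dots> = b" using \<open>finite B\<close> \<open>b \<in> B\<close> by (simp add: sum.delta')
  finally show "b = (\<Sum>x\<in>B. smul (if x = b then 1 else 0) x)" by simp
qed

lemma span_self: "is_sf K \<Longrightarrow> is_subspace K E \<Longrightarrow> finite E \<Longrightarrow> span_over K E = (E::'a::field vec3 set)"
  using span_sub[of K E E] in_span[of K E] by blast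

definition indep :: "'a::field set \<Rightarrow> 'a vec3 set \<Rightarrow> bool" where
  "indep K B \<longleftrightarrow> (\<forall>c. (\<forall>b\<in>B. c b \<in> K) \<and> (\<Sum>b\<in>B. smul (c b) b) = 0 \<longrightarrow> (\<forall>b\<in>B. c b = 0))"

lemma basis_ex:
  assumes K: "is_sf K" and E: "is_subspace K E" and fE: "finite (E::'a::field vec3 set)"
  shows "\<exists>B. finite B \<and> B \<subseteq> E \<and> span_over K B = E \<and> card B = sub_dim K E \<and> indep K B"
proof -
  let ?P = "\<lambda>d. \<exists>B. finite B \<and> B \<subseteq> E \<and> card B = d \<and> span_over K B = E"
  have "?P (card E)" using fE span_self[OF K E fE] by blast
  hence "?P (Least ?P)" by (rule LeastI)
  then obtain B where B: "finite B" "B \<subseteq> E" "card B = sub_dim K E" "span_over K B = E"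
    unfolding sub_dim_def by blast
  have "indep K B" unfolding indep_def
  proof (rule ccontr)
    assume "\<not> (\<forall>c. (\<forall>b\<in>B. c b \<in> K) \<and> (\<Sum>b\<in>B. smul (c b) b) = 0 \<longrightarrow> (\<forall>b\<in>B. c b = 0))"
    then obtain c b0 where c: "\<forall>b\<in>B. c b \<in> K" "(\<Sum>b\<in>B. smul (c b) b) = 0"
      and b0: "b0 \<in> B" "c b0 \<noteq> 0" by blast
    define B' where "B' = B - {b0}"
    have fB': "finite B'" using B by (simp add: B'_def)
    have "(\<Sum>b\<in>B. smul (c b) b) = smul (c b0) b0 + (\<Sum>b\<in>B'. smul (c b) b)"
      unfolding B'_def using B(1) b0(1) by (rule sum.remove)
    hence eq: "smul (c b0) b0 = - (\<Sum>b\<in>B'. smul (c b) b)" using c(2) by (simp add: add_eq_0_iff)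
    have "b0 = smul (inverse (c b0)) (smul (c b0) b0)" using b0 by (simp add: smul_smul)
    also have "\<dots> = (\<Sum>b\<in>B'. smul (- inverse (c b0) * c b) b)"
      by (simp add: eq smul_neg_r smul_sum smul_smul sum_negf[symmetric] smul_neg_l)
    finally have b0e: "b0 = (\<Sum>b\<in>B'. smul (- inverse (c b0) * c b) b)" .
    have "\<forall>b\<in>B'. - inverse (c b0) * c b \<in> K"
    proof
      fix b assume "b \<in> B'"
      hence "c b \<in> K" "c b0 \<in> K" using c(1) b0(1) by (auto simp: B'_def simp del: split_paired_all)
      thus "- inverse (c b0) * c b \<in> K" by (intro sf_facts(4)[OF K] sf_facts(5)[OF K] sf_facts(6)[OF K])
    qed
    hence "b0 \<in> span_over K B'" unfolding span_over_def using b0e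
      by (intro CollectI exI[of _ "\<lambda>b. - inverse (c b0) * c b"] conjI) blast+
    hence "B \<subseteq> span_over K B'" using in_span[OF K fB'] by (auto simp: B'_def)
    hence "E \<subseteq> span_over K B'" using span_sub[OF span_is_sub[OF K]] B(4) by metis
    moreover have "span_over K B' \<subseteq> E" using span_sub[OF E, of B'] B(2) by (auto simp: B'_def simp del: split_paired_all)
    ultimately have PB: "?P (card B')" using fB' B(2) by (auto simp: B'_def)
    have "card B' < card B" unfolding B'_def by (rule card_Diff1_less[OF B(1) b0(1)])
    hence "card B' < (LEAST d. ?P d)" using B(3) unfolding sub_dim_def by simp
    thus False using not_less_Least[of "card B'" ?P] PB by blast
  qed
  thus ?thesis using B by blast
qed

lemma card_span_indep:
  assumes K: "is_sf K" and fB: "finite B" and ind: "indep K (B::'a::{field,finite} vec3 set)"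
  shows "card (span_over K B) = card K ^ card B"
proof -
  define \<Phi> where "\<Phi> c = (\<Sum>b\<in>B. smul (c b) b)" for c
  have im: "span_over K B = \<Phi> ` (PiE B (\<lambda>_. K))"
  proof
    show "span_over K B \<subseteq> \<Phi> ` (PiE B (\<lambda>_. K))"
    proof
      fix v assume "v \<in> span_over K B"
      then obtain c where c: "\<forall>b\<in>B. c b \<in> K" "v = \<Phi> c" unfolding span_over_def \<Phi>_def by blast
      have "restrict c B \<in> PiE B (\<lambda>_. K)" using c by auto
      moreover have "\<Phi> (restrict c B) = \<Phi> c" unfolding \<Phi>_def by (rule sum.cong) auto
      ultimately show "v \<in> \<Phi> ` (PiE B (\<lambda>_. K))" using c by (metis image_eqI)
    qed
    show "\<Phi> ` (PiE B (\<lambda>_. K)) \<subseteq> span_over K B" unfolding span_over_def \<Phi>_def by auto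
  qed
  have inj: "inj_on \<Phi> (PiE B (\<lambda>_. K))"
  proof (rule inj_onI)
    fix c d assume c: "c \<in> PiE B (\<lambda>_. K)" and d: "d \<in> PiE B (\<lambda>_. K)" and eq: "\<Phi> c = \<Phi> d"
    have "(\<Sum>b\<in>B. smul (c b - d b) b) = 0" using eq unfolding \<Phi>_def
      by (simp add: smul_diff_l sum_subtractf)
    moreover have "\<forall>b\<in>B. c b - d b \<in> K"
    proof
      fix b assume "b \<in> B"
      hence "c b \<in> K" "d b \<in> K" using c d by (auto simp del: split_paired_all)
      thus "c b - d b \<in> K" by (rule sf_facts(7)[OF K])
    qed
    ultimately have "\<forall>b\<in>B. c b - d b = 0" using ind unfolding indep_def
      by (elim allE[of _ "\<lambda>b. c b - d b"]) blast
    thus "c = d" using c d by (metis PiE_ext right_minus_eq)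
  qed
  have "card (span_over K B) = card (PiE B (\<lambda>_. K))" using im inj by (simp add: card_image)
  also have "\<dots> = card K ^ card B" using fB by (simp add: card_PiE)
  finally show ?thesis .
qed

lemma dim_card:
  assumes K: "is_sf K" and E: "is_subspace K (E::'a::{field,finite} vec3 set)"
  shows "card E = card K ^ sub_dim K E"
proof -
  obtain B where "finite B" "B \<subseteq> E" "span_over K B = E" "card B = sub_dim K E" "indep K B"
    using basis_ex[OF K E] by auto
  thus ?thesis using card_span_indep[OF K] by metis
qed

definition ext :: "'a::field set \<Rightarrow> 'a vec3 set \<Rightarrow> 'a vec3 \<Rightarrow> 'a vec3 set" where
  "ext K A w = {a + smul c w | a c. a \<in> A \<and> c \<in> K}"

lemma ext_sub:
  assumes K: "is_sf K" and A: "is_subspace K A"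
  shows "is_subspace K (ext K A (w::'a::field vec3))"
  unfolding is_subspace_def ext_def
proof (intro conjI ballI)
  show "0 \<in> {a + smul c w |a c. a \<in> A \<and> c \<in> K}"
    by (rule CollectI, rule exI[of _ 0], rule exI[of _ 0]) (simp add: sub_0[OF A] sf_facts(1)[OF K])
  fix u v assume "u \<in> {a + smul c w |a c. a \<in> A \<and> c \<in> K}" "v \<in> {a + smul c w |a c. a \<in> A \<and> c \<in> K}"
  then obtain a c a' c' where "u = a + smul c w" "a \<in> A" "c \<in> K" "v = a' + smul c' w" "a' \<in> A" "c' \<in> K"
    by blast
  moreover have "a + smul c w + (a' + smul c' w) = (a + a') + smul (c + c') w"
    by (simp add: smul_add_l algebra_simps)
  ultimately show "u + v \<in> {a + smul c w |a c. a \<in> A \<and> c \<in> K}"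
    using sub_add[OF A] sf_facts(3)[OF K] by blast
next
  fix d u assume d: "d \<in> K" and "u \<in> {a + smul c w |a c. a \<in> A \<and> c \<in> K}"
  then obtain a c where "u = a + smul c w" "a \<in> A" "c \<in> K" by blast
  moreover have "smul d (a + smul c w) = smul d a + smul (d * c) w" by (simp add: smul_add_r smul_smul)
  ultimately show "smul d u \<in> {a + smul c w |a c. a \<in> A \<and> c \<in> K}"
    using sub_smul[OF A d] sf_facts(4)[OF K] d by blast
qed

lemma ext_mem: "a \<in> A \<Longrightarrow> c \<in> K \<Longrightarrow> a + smul c w \<in> ext K A w"
  unfolding ext_def by blast

lemma ext_supset: "is_sf K \<Longrightarrow> A \<subseteq> ext K A (w::'a::field vec3)"
  using ext_mem[of _ A 0 K w] sf_facts(1) by fastforce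

lemma ext_w: "is_sf K \<Longrightarrow> is_subspace K A \<Longrightarrow> w \<in> ext K A (w::'a::field vec3)"
  using ext_mem[of 0 A 1 K w] sf_facts(2) sub_0 by fastforce

lemma ext_le: "is_subspace K E \<Longrightarrow> A \<subseteq> E \<Longrightarrow> w \<in> E \<Longrightarrow> ext K A w \<subseteq> (E::'a::field vec3 set)"
  unfolding ext_def using sub_add sub_smul by blast

lemma ext_card:
  assumes K: "is_sf K" and A: "is_subspace K A" and w: "w \<notin> A"
  shows "card (ext K A (w::'a::{field,finite} vec3)) = card A * card K"
proof -
  have "ext K A w = (\<lambda>(a, c). a + smul c w) ` (A \<times> K)" unfolding ext_def by auto
  moreover have "inj_on (\<lambda>(a, c). a + smul c w) (A \<times> K)"
  proof (rule inj_onI, clarify)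
    fix a c a' c' assume h: "a \<in> A" "c \<in> K" "a' \<in> A" "c' \<in> K" "a + smul c w = a' + smul c' w"
    have e: "smul (c - c') w = a' - a" using h(5) by (simp add: smul_diff_l algebra_simps)
    show "a = a' \<and> c = c'"
    proof (cases "c = c'")
      case True thus ?thesis using h(5) by simp
    next
      case False
      have "w = smul (inverse (c - c')) (smul (c - c') w)" using False by (simp add: smul_smul)
      also have "\<dots> \<in> A" unfolding e using sub_smul[OF A] sub_diff[OF K A] h sf_facts(6,7)[OF K] by simp
      finally show ?thesis using w by simp
    qed
  qed
  ultimately show ?thesis by (simp add: card_image card_cartesian_product)
qed

lemma pt_iff: "x \<in> pt u \<longleftrightarrow> (\<exists>c. x = smul c (u::'a::field vec3))"
  unfolding pt_def span_over_def by auto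

lemma pt_sub: "is_subspace K (pt (u::'a::field vec3))"
  unfolding is_subspace_def
proof (intro conjI ballI)
  show "0 \<in> pt u" unfolding pt_iff by (rule exI[of _ 0]) simp
  fix x y assume "x \<in> pt u" "y \<in> pt u"
  then obtain a b where "x = smul a u" "y = smul b u" unfolding pt_iff by blast
  thus "x + y \<in> pt u" unfolding pt_iff by (metis smul_add_l)
next
  fix c x assume "x \<in> pt u"
  then obtain a where "x = smul a u" unfolding pt_iff by blast
  thus "smul c x \<in> pt u" unfolding pt_iff by (metis smul_smul)
qed

lemma pt_self: "u \<in> pt (u::'a::field vec3)"
  unfolding pt_iff by (metis smul_one)

lemma card_pt: "u \<noteq> 0 \<Longrightarrow> card (pt (u::'a::{field,finite} vec3)) = CARD('a)"
proof -
  assume u: "u \<noteq> 0"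
  have "pt u = (\<lambda>c. smul c u) ` UNIV" using pt_iff[of _ u] by (auto simp del: split_paired_all)
  moreover have "inj (\<lambda>c. smul c u)" using smul_cancel[OF u] by (auto intro: injI)
  ultimately show ?thesis by (simp add: card_image)
qed




lemma additive_sum:
  fixes \<psi> :: "'a::field \<Rightarrow> 'a"
  assumes "\<forall>x y. \<psi> (x + y) = \<psi> x + \<psi> y"
  shows "\<psi> (sum f A) = (\<Sum>i\<in>A. \<psi> (f i))"
proof -
  have "\<psi> 0 + \<psi> 0 = \<psi> 0 + 0" by (subst assms[rule_format, of 0 0, symmetric]) simp
  hence z: "\<psi> 0 = 0" by (rule add_left_imp_eq)
  show ?thesis by (induction A rule: infinite_finite_induct) (simp_all add: z assms)
qed

context ffs begin

lemma tr_diff: "Tr (x - y) = Tr x - Tr y"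
  using tr_add[of "x - y" y] by (simp add: algebra_simps)

lemma tr_basics: "\<exists>x0. Tr x0 = 1 \<and> card K = q \<and> card {x. Tr x = 0} = q ^ (s - 1)"
proof -
  let ?T = "{x. Tr x = 0}"
  have lt: "q ^ (s - 1) < q ^ s" using q2 s2 by (intro power_strict_increasing) auto
  have "card ?T < card (UNIV :: 'a set)" using card_T lt cardF by simp
  hence "?T \<noteq> UNIV" by auto
  then obtain x1 where x1: "Tr x1 \<noteq> 0" by blast
  define x0 where "x0 = inverse (Tr x1) * x1"
  have "inverse (Tr x1) \<in> K" using tr_K sf_facts(6)[OF sfK] by blast
  hence x0: "Tr x0 = 1" unfolding x0_def using tr_smul x1 by simp
  define g where "g = (\<lambda>(t, c). t + c * x0)"
  have "x \<in> g ` (?T \<times> K)" for x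
  proof -
    have "x - Tr x * x0 \<in> ?T" using tr_diff tr_smul[OF tr_K] x0 by simp
    moreover have "x = g (x - Tr x * x0, Tr x)" unfolding g_def by simp
    ultimately show "x \<in> g ` (?T \<times> K)" using tr_K by blast
  qed
  hence "g ` (?T \<times> K) = UNIV" by blast
  moreover have "inj_on g (?T \<times> K)"
  proof (rule inj_onI, clarify)
    fix t c t' c' assume h: "Tr t = 0" "c \<in> K" "Tr t' = 0" "c' \<in> K" "g (t, c) = g (t', c')"
    have "Tr (g (t, c)) = c" unfolding g_def using h(1,2) tr_add tr_smul x0 by simp
    moreover have "Tr (g (t', c')) = c'" unfolding g_def using h(3,4) tr_add tr_smul x0 by simp
    ultimately have "c = c'" using h(5) by simp
    thus "t = t' \<and> c = c'" using h(5) unfolding g_def by simp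
  qed
  ultimately have "card (?T \<times> K) = card (UNIV :: 'a set)" using card_image by metis
  hence eq: "card ?T * card K = q ^ s" using cardF by (simp add: card_cartesian_product)
  have "q ^ (s - 1) * q = q ^ s" using s2 by (simp add: power_Suc2[symmetric])
  hence "q ^ (s - 1) * q \<le> q ^ (s - 1) * card K" using eq card_T mult_le_mono1[OF card_T, of "card K"] by (simp add: mult.commute)
  hence "q \<le> card K" using q2 by simp
  hence cK: "card K = q" using card_K_le by simp
  hence "card ?T * q = q ^ (s - 1) * q" using eq \<open>q ^ (s - 1) * q = q ^ s\<close> by simp
  hence "card ?T = q ^ (s - 1)" using q2 by simp
  thus ?thesis using x0 cK by blast
qed

lemma hyperplane:
  fixes S :: "'a set"
  assumes S0: "0 \<in> S" and Sadd: "\<And>a b. a \<in> S \<Longrightarrow> b \<in> S \<Longrightarrow> a + b \<in> S"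
    and Smul: "\<And>c a. c \<in> K \<Longrightarrow> a \<in> S \<Longrightarrow> c * a \<in> S"
    and cS: "card S = q ^ (s - 1)"
  shows "\<exists>l. l \<noteq> 0 \<and> (\<forall>z. z \<in> S \<longleftrightarrow> Tr (l * z) = 0)"
proof -
  obtain x0 where x0: "Tr x0 = 1" and cK: "card K = q" using tr_basics by blast
  have Sdiff: "a - b \<in> S" if "a \<in> S" "b \<in> S" for a b
  proof -
    have "(-1) * b \<in> S" by (rule Smul[OF sf_facts(5)[OF sfK sf_facts(2)[OF sfK]] that(2)])
    hence "a + (-1) * b \<in> S" by (rule Sadd[OF that(1)])
    thus ?thesis by simp
  qed
  have lt: "q ^ (s - 1) < q ^ s" using q2 s2 by (intro power_strict_increasing) auto
  have "card S < card (UNIV :: 'a set)" using cS lt cardF by simp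
  then obtain y where y: "y \<notin> S" by (metis UNIV_eq_I less_irrefl)
  have uniq: "c = c'" if "c \<in> K" "c' \<in> K" "x - c * y \<in> S" "x - c' * y \<in> S" for x c c'
  proof (rule ccontr)
    assume ne: "c \<noteq> c'"
    have "(x - c' * y) - (x - c * y) \<in> S" using Sdiff that by blast
    hence "(c - c') * y \<in> S" by (simp add: algebra_simps)
    hence "inverse (c - c') * ((c - c') * y) \<in> S" by (rule Smul[OF sf_facts(6)[OF sfK sf_facts(7)[OF sfK that(1) that(2)]]])
    thus False using ne y by (simp add: mult.assoc[symmetric])
  qed
  define g where "g = (\<lambda>(a, c). a + c * y)"
  have injg: "inj_on g (S \<times> K)"
  proof (rule inj_onI, clarify)
    fix a c a' c' assume h: "a \<in> S" "c \<in> K" "a' \<in> S" "c' \<in> K" "g (a, c) = g (a', c')"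
    have "g (a, c) - c * y = a" by (simp add: g_def)
    moreover have "g (a, c) - c' * y = a'" using h(5) by (simp add: g_def)
    ultimately have "g (a, c) - c * y \<in> S" "g (a, c) - c' * y \<in> S" using h by simp_all
    hence "c = c'" using uniq h by blast
    thus "a = a' \<and> c = c'" using h(5) unfolding g_def by simp
  qed
  have "card (g ` (S \<times> K)) = card S * card K" using card_image[OF injg] by (simp add: card_cartesian_product)
  also have "\<dots> = q ^ (s - 1) * q" using cS cK by simp
  also have "\<dots> = q ^ s" using s2 by (simp add: power_Suc2[symmetric])
  finally have "card (g ` (S \<times> K)) = card (UNIV :: 'a set)" using cardF by simp
  hence surj: "g ` (S \<times> K) = UNIV" using card_subset_eq[of UNIV "g ` (S \<times> K)"] by simp
  have exi: "\<exists>c. c \<in> K \<and> x - c * y \<in> S" for x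
  proof -
    have "x \<in> g ` (S \<times> K)" using surj by simp
    then obtain a c where "a \<in> S" "c \<in> K" "x = g (a, c)" by blast
    thus ?thesis unfolding g_def by auto
  qed
  define \<phi> where "\<phi> x = (SOME c. c \<in> K \<and> x - c * y \<in> S)" for x
  have \<phi>: "\<phi> x \<in> K \<and> x - \<phi> x * y \<in> S" for x unfolding \<phi>_def using someI_ex[OF exi] .
  have \<phi>u: "\<phi> x = c" if "c \<in> K" "x - c * y \<in> S" for x c using uniq[OF \<phi>[THEN conjunct1] that(1) \<phi>[THEN conjunct2] that(2)] .
  define H where "H = {\<psi>::'a \<Rightarrow> 'a. (\<forall>x x'. \<psi> (x + x') = \<psi> x + \<psi> x') \<and> (\<forall>c\<in>K. \<forall>x. \<psi> (c * x) = c * \<psi> x) \<and> (\<forall>x. \<psi> x \<in> K)}"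
  have \<phi>H: "\<phi> \<in> H" unfolding H_def
  proof (intro CollectI conjI allI ballI)
    fix x x'
    have "(x + x') - (\<phi> x + \<phi> x') * y = (x - \<phi> x * y) + (x' - \<phi> x' * y)" by (simp add: algebra_simps)
    hence "(x + x') - (\<phi> x + \<phi> x') * y \<in> S" using Sadd \<phi> by metis
    thus "\<phi> (x + x') = \<phi> x + \<phi> x'" by (rule \<phi>u[OF sf_facts(3)[OF sfK \<phi>[THEN conjunct1] \<phi>[THEN conjunct1]]])
  next
    fix c x assume c: "c \<in> K"
    have "c * x - (c * \<phi> x) * y = c * (x - \<phi> x * y)" by (simp add: algebra_simps)
    hence "c * x - (c * \<phi> x) * y \<in> S" using Smul[OF c] \<phi> by metis
    thus "\<phi> (c * x) = c * \<phi> x" by (rule \<phi>u[OF sf_facts(4)[OF sfK c \<phi>[THEN conjunct1]]])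
  next
    fix x show "\<phi> x \<in> K" using \<phi> by blast
  qed
  have \<phi>S: "\<phi> z = 0 \<longleftrightarrow> z \<in> S" for z
  proof
    assume "\<phi> z = 0" thus "z \<in> S" using \<phi>[of z] by simp
  next
    assume "z \<in> S" thus "\<phi> z = 0" using \<phi>u[of 0 z] sf_facts(1)[OF sfK] by simp
  qed
  have \<phi>y: "\<phi> y = 1" using \<phi>u[of 1 y] sf_facts(2)[OF sfK] S0 by simp
  define E0 :: "'a vec3 set" where "E0 = range (\<lambda>x. (x, 0, 0))"
  have E0: "is_subspace K E0" unfolding is_subspace_def E0_def
  proof (intro conjI ballI)
    have "(0::'a vec3) = (\<lambda>x. (x, 0, 0)) 0" by (simp add: zero_prod_def)
    thus "(0::'a vec3) \<in> range (\<lambda>x. (x, 0, 0))" by (rule range_eqI)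
  next
    fix u v :: "'a vec3" assume "u \<in> range (\<lambda>x. (x, 0, 0))" "v \<in> range (\<lambda>x. (x, 0, 0))"
    then obtain a b where ab: "u = (a, 0, 0)" "v = (b, 0, 0)" by blast
    have "u + v = (\<lambda>x. (x, 0, 0)) (a + b)" using ab by simp
    thus "u + v \<in> range (\<lambda>x. (x, 0, 0))" by (rule range_eqI)
  next
    fix c and u :: "'a vec3" assume "u \<in> range (\<lambda>x. (x, 0, 0))"
    then obtain a where ab: "u = (a, 0, 0)" by blast
    have "smul c u = (\<lambda>x. (x, 0, 0)) (c * a)" using ab by (simp add: smul_def)
    thus "smul c u \<in> range (\<lambda>x. (x, 0, 0))" by (rule range_eqI)
  qed
  obtain B where B: "finite B" "B \<subseteq> E0" "span_over K B = E0" "indep K B"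
    using basis_ex[OF sfK E0] by auto
  have cE0: "card E0 = CARD('a)" unfolding E0_def by (rule card_image) (auto intro: injI)
  have cB: "CARD('a) = card K ^ card B" using card_span_indep[OF sfK B(1) B(4)] B(3) cE0 by simp
  define R where "R \<psi> = restrict (\<lambda>b. \<psi> (fst b)) B" for \<psi> :: "'a \<Rightarrow> 'a"
  have RH: "R ` H \<subseteq> PiE B (\<lambda>_. K)" unfolding R_def H_def by auto
  have injR: "inj_on R H"
  proof (rule inj_onI)
    fix \<psi> \<psi>' assume h: "\<psi> \<in> H" "\<psi>' \<in> H" "R \<psi> = R \<psi>'"
    have eqB: "\<psi> (fst b) = \<psi>' (fst b)" if "b \<in> B" for b
      using fun_cong[OF h(3), of b] that unfolding R_def by simp
    show "\<psi> = \<psi>'"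
    proof
      fix x
      have "(x, 0, 0) \<in> span_over K B" using B(3) unfolding E0_def by auto
      then obtain c where c: "\<forall>b\<in>B. c b \<in> K" "(x, 0, 0) = (\<Sum>b\<in>B. smul (c b) b)"
        unfolding span_over_def by blast
      have xs: "x = (\<Sum>b\<in>B. c b * fst b)" using arg_cong[OF c(2), of fst] by (simp add: fst_sum)
      have rep: "\<psi> x = (\<Sum>b\<in>B. c b * \<psi> (fst b))" if "\<psi> \<in> H" for \<psi>
      proof -
        have "\<psi> x = (\<Sum>b\<in>B. \<psi> (c b * fst b))" unfolding xs
          by (rule additive_sum) (use that in \<open>simp add: H_def\<close>)
        also have "\<dots> = (\<Sum>b\<in>B. c b * \<psi> (fst b))"
          by (rule sum.cong) (use that c in \<open>auto simp: H_def\<close>)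
        finally show ?thesis .
      qed
      have "\<psi> x = (\<Sum>b\<in>B. c b * \<psi> (fst b))" by (rule rep[OF h(1)])
      also have "\<dots> = (\<Sum>b\<in>B. c b * \<psi>' (fst b))" by (rule sum.cong) (simp_all add: eqB)
      also have "\<dots> = \<psi>' x" by (rule rep[OF h(2), symmetric])
      finally show "\<psi> x = \<psi>' x" .
    qed
  qed
  have "card H \<le> card (PiE B (\<lambda>_. K))"
    using card_image[OF injR] RH by (metis card_mono finite_PiE finite B(1) finite)
  also have "\<dots> = CARD('a)" using cB B(1) by (simp add: card_PiE)
  finally have cH: "card H \<le> CARD('a)" .
  define \<Lambda> where "\<Lambda> l = (\<lambda>x. Tr (l * x))" for l :: 'a
  have \<Lambda>H: "range \<Lambda> \<subseteq> H" unfolding H_def \<Lambda>_def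
  proof (auto simp: distrib_left tr_add tr_K)
    fix l c x :: 'a assume "c \<in> K"
    have e: "l * (c * x) = c * (l * x)" by (simp add: mult.left_commute)
    show "Tr (l * (c * x)) = c * Tr (l * x)" unfolding e by (rule tr_smul[OF \<open>c \<in> K\<close>])
  qed
  have inj\<Lambda>: "inj \<Lambda>"
  proof (rule injI)
    fix l l' assume "\<Lambda> l = \<Lambda> l'"
    hence e: "Tr (l * x) = Tr (l' * x)" for x unfolding \<Lambda>_def by metis
    show "l = l'"
    proof (rule ccontr)
      assume ne: "l \<noteq> l'"
      have "Tr ((l - l') * (inverse (l - l') * x0)) = Tr (l * (inverse (l - l') * x0)) - Tr (l' * (inverse (l - l') * x0))"
        by (simp add: left_diff_distrib tr_diff)
      also have "\<dots> = 0" using e by simp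
      finally have "Tr ((l - l') * (inverse (l - l') * x0)) = 0" .
      moreover have "(l - l') * (inverse (l - l') * x0) = x0" using ne by (simp add: mult.assoc[symmetric])
      ultimately show False using x0 by simp
    qed
  qed
  have "card (range \<Lambda>) = CARD('a)" using inj\<Lambda> by (simp add: card_image)
  hence "range \<Lambda> = H" using \<Lambda>H cH by (metis card_seteq finite)
  then obtain l where l: "\<phi> = \<Lambda> l" using \<phi>H by blast
  have "Tr 0 + Tr 0 = Tr 0 + 0" using tr_add[of 0 0] by simp
  hence T0: "Tr 0 = 0" by (rule add_left_imp_eq)
  have "l \<noteq> 0"
  proof
    assume "l = 0"
    hence "\<phi> y = Tr 0" using l by (simp add: \<Lambda>_def)
    thus False using \<phi>y T0 by simp
  qed
  moreover have "\<forall>z. z \<in> S \<longleftrightarrow> Tr (l * z) = 0" using \<phi>S l unfolding \<Lambda>_def by simp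
  ultimately show ?thesis by blast
qed

end



lemma card_ge2: "CARD('a::{field,finite}) \<ge> 2"
proof -
  have "card {0::'a, 1} = 2" by simp
  moreover have "card {0::'a, 1} \<le> CARD('a)" by (rule card_mono) simp_all
  ultimately show ?thesis by simp
qed

lemma sub_UNIV_K: "is_subspace UNIV E \<Longrightarrow> is_subspace K E"
  unfolding is_subspace_def by blast

lemma sub_Int: "is_subspace K A \<Longrightarrow> is_subspace K B \<Longrightarrow> is_subspace K (A \<inter> B)"
  unfolding is_subspace_def by blast

lemma line_ext:
  assumes u: "u \<noteq> 0" and w: "w \<notin> pt (u::'a::{field,finite} vec3)"
  shows "is_line (ext UNIV (pt u) w)"
proof -
  have sub: "is_subspace UNIV (ext UNIV (pt u) w)" by (rule ext_sub[OF sf_UNIV pt_sub])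
  have "card (ext UNIV (pt u) w) = CARD('a) * CARD('a)"
    using ext_card[OF sf_UNIV pt_sub w] card_pt[OF u] by simp
  moreover have "card (ext UNIV (pt u) w) = CARD('a) ^ sub_dim UNIV (ext UNIV (pt u) w)"
    by (rule dim_card[OF sf_UNIV sub])
  ultimately have "CARD('a) ^ sub_dim UNIV (ext UNIV (pt u) w) = CARD('a) ^ 2"
    by (simp add: power2_eq_square)
  hence "sub_dim UNIV (ext UNIV (pt u) w) = 2" using card_ge2[where 'a='a]
    by (simp add: power_inject_exp)
  thus ?thesis using sub unfolding is_line_def by simp
qed

lemma pt_range: "pt u = range (\<lambda>c. smul c (u::'a::field vec3))"
  using pt_iff[of _ u] by (auto simp del: split_paired_all)

lemma pt_scale: "a \<noteq> 0 \<Longrightarrow> pt (smul a x) = pt (x::'a::field vec3)"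
proof -
  assume a: "a \<noteq> 0"
  show ?thesis
  proof (rule Set.set_eqI)
    fix y
    have "(\<exists>c. y = smul c (smul a x)) \<longleftrightarrow> (\<exists>c. y = smul c x)"
    proof
      assume "\<exists>c. y = smul c (smul a x)" then obtain c where "y = smul c (smul a x)" by blast
      thus "\<exists>c. y = smul c x" by (metis smul_smul)
    next
      assume "\<exists>c. y = smul c x" then obtain c where "y = smul c x" by blast
      hence "y = smul (c * inverse a) (smul a x)" using a by (simp add: smul_smul mult.assoc)
      thus "\<exists>c. y = smul c (smul a x)" by blast
    qed
    thus "y \<in> pt (smul a x) \<longleftrightarrow> y \<in> pt x" unfolding pt_iff .
  qed
qed

lemma linset_map:
  fixes g :: "'a::field vec3 \<Rightarrow> 'a vec3"
  assumes inj: "inj g" and add: "\<And>u v. g (u + v) = g u + g v" and hom: "\<And>c v. g (smul c v) = smul c (g v)"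
  shows "(\<lambda>P. g ` P) ` linset X = linset (g ` X)"
proof -
  have "g 0 + g 0 = g 0 + 0" using add[of 0 0] by simp
  hence g0: "g 0 = 0" by (rule add_left_imp_eq)
  have gpt: "g ` pt x = pt (g x)" for x
  proof -
    have "g ` pt x = g ` range (\<lambda>c. smul c x)" unfolding pt_range ..
    also have "\<dots> = range (\<lambda>c. smul c (g x))" unfolding image_image hom ..
    finally show ?thesis unfolding pt_range .
  qed
  have nz: "g x \<noteq> 0 \<longleftrightarrow> x \<noteq> 0" for x using inj g0 by (metis injD)
  show ?thesis
  proof (rule Set.set_eqI)
    fix Q
    show "Q \<in> (\<lambda>P. g ` P) ` linset X \<longleftrightarrow> Q \<in> linset (g ` X)"
    proof
      assume "Q \<in> (\<lambda>P. g ` P) ` linset X"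
      then obtain x where x: "x \<in> X" "x \<noteq> 0" "Q = g ` pt x" unfolding linset_def by blast
      have "Q = pt (g x)" using x(3) gpt by simp
      moreover have "g x \<in> g ` X" "g x \<noteq> 0" using x nz by auto
      ultimately show "Q \<in> linset (g ` X)" unfolding linset_def by blast
    next
      assume "Q \<in> linset (g ` X)"
      then obtain x where x: "x \<in> X" "g x \<noteq> 0" "Q = pt (g x)" unfolding linset_def by blast
      have "pt x \<in> linset X" unfolding linset_def using x(1) x(2) nz by blast
      moreover have "Q = g ` pt x" using x(3) gpt by simp
      ultimately show "Q \<in> (\<lambda>P. g ` P) ` linset X" by blast
    qed
  qed
qed




context ffs begin

lemma main:
  fixes W :: "'a vec3 set"
  assumes Wsub: "is_subspace K W"
    and Wdim: "sub_dim K W = s + 1"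
    and blk: "blocking_set (linset W)"
    and nl: "\<not> (\<exists>l. is_line l \<and> linset W = linset l)"
    and wt: "\<exists>P\<in>linset W. weight K W P = s - 1"
  shows "proj_equiv (linset W) (linset (U_trace q s))"
proof -
  obtain x0 where x0: "Tr x0 = 1" and cK: "card K = q" using tr_basics by blast
  obtain v where v: "v \<in> W" "v \<noteq> 0" "sub_dim K (W \<inter> pt v) = s - 1"
    using wt unfolding linset_def weight_def by blast
  define A where "A = W \<inter> pt v"
  have Asub: "is_subspace K A" unfolding A_def by (rule sub_Int[OF Wsub pt_sub])
  have cW: "card W = q ^ (s + 1)" using dim_card[OF sfK Wsub] Wdim cK by simp
  have cA: "card A = q ^ (s - 1)" using dim_card[OF sfK Asub] v(3) cK unfolding A_def by simp
  have AW: "A \<subseteq> W" unfolding A_def by blast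
  have qpos: "q > 0" using q2 by simp
  have ps1: "q ^ (s - 1) * q = q ^ s" using s2 by (simp add: power_Suc2[symmetric])
  have ps2: "q ^ s * q = q ^ (s + 1)" by (simp add: power_Suc2)
  have "q ^ (s - 1) < q ^ (s + 1)" using q2 by (intro power_strict_increasing) auto
  hence "card A < card W" using cA cW by simp
  hence "A \<noteq> W" by auto
  then obtain w1 where w1: "w1 \<in> W" "w1 \<notin> A" using AW by blast
  define A1 where "A1 = ext K A w1"
  have A1sub: "is_subspace K A1" unfolding A1_def by (rule ext_sub[OF sfK Asub])
  have cA1: "card A1 = q ^ s" unfolding A1_def using ext_card[OF sfK Asub w1(2)] cA cK ps1 by simp
  have A1W: "A1 \<subseteq> W" unfolding A1_def by (rule ext_le[OF Wsub AW w1(1)])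
  have "q ^ s < q ^ (s + 1)" using q2 by (intro power_strict_increasing) auto
  hence "card A1 < card W" using cA1 cW by simp
  hence "A1 \<noteq> W" by auto
  then obtain w2 where w2: "w2 \<in> W" "w2 \<notin> A1" using A1W by blast
  define A2 where "A2 = ext K A1 w2"
  have cA2: "card A2 = q ^ (s + 1)" unfolding A2_def using ext_card[OF sfK A1sub w2(2)] cA1 cK ps2 by simp
  have A2W: "A2 \<subseteq> W" unfolding A2_def by (rule ext_le[OF Wsub A1W w2(1)])
  have WA2: "W = A2" using card_subset_eq[OF finite A2W] cA2 cW by simp
  have Wrep: "\<exists>a b c. a \<in> A \<and> b \<in> K \<and> c \<in> K \<and> w = a + smul b w1 + smul c w2" if "w \<in> W" for w
  proof -
    from that obtain a1 c where "a1 \<in> A1" "c \<in> K" "w = a1 + smul c w2"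
      unfolding WA2 A2_def ext_def by blast
    moreover from \<open>a1 \<in> A1\<close> obtain a b where "a \<in> A" "b \<in> K" "a1 = a + smul b w1"
      unfolding A1_def ext_def by blast
    ultimately show ?thesis by blast
  qed
  have Wmem: "a + smul b w1 + smul c w2 \<in> W" if "a \<in> A" "b \<in> K" "c \<in> K" for a b c
  proof -
    have "a + smul b w1 \<in> A1" unfolding A1_def by (rule ext_mem[OF that(1,2)])
    hence "a + smul b w1 + smul c w2 \<in> A2" unfolding A2_def by (rule ext_mem[OF _ that(3)])
    thus ?thesis using A2W by blast
  qed
  have w1v: "w1 \<notin> pt v" using w1 unfolding A_def by blast
  define S where "S = {z. smul z v \<in> W}"
  have S0: "0 \<in> S" unfolding S_def using sub_0[OF Wsub] by simp
  have Sadd: "a + b \<in> S" if "a \<in> S" "b \<in> S" for a b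
    using sub_add[OF Wsub, of "smul a v" "smul b v"] that unfolding S_def by (simp add: smul_add_l)
  have Smul: "c * a \<in> S" if "c \<in> K" "a \<in> S" for c a
    using sub_smul[OF Wsub that(1), of "smul a v"] that(2) unfolding S_def by (simp add: smul_smul)
  have SA: "(\<lambda>z. smul z v) ` S = A"
  proof
    show "(\<lambda>z. smul z v) ` S \<subseteq> A" unfolding S_def A_def using pt_iff by blast
    show "A \<subseteq> (\<lambda>z. smul z v) ` S"
    proof
      fix a assume "a \<in> A"
      hence "a \<in> W" "a \<in> pt v" unfolding A_def by auto
      then obtain z where "a = smul z v" "a \<in> W" using pt_iff by blast
      thus "a \<in> (\<lambda>z. smul z v) ` S" unfolding S_def by blast
    qed
  qed
  have "inj_on (\<lambda>z. smul z v) S" using smul_cancel[OF v(2)] by (auto intro: inj_onI)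
  hence cS: "card S = q ^ (s - 1)" using card_image SA cA by metis
  obtain l where l: "l \<noteq> 0" "\<And>z. z \<in> S \<longleftrightarrow> Tr (l * z) = 0"
    using hyperplane[OF S0 Sadd Smul cS] by blast
  have indep3: "\<alpha> = 0 \<and> \<beta> = 0 \<and> \<gamma> = 0" if dep: "smul \<alpha> v + smul \<beta> w1 + smul \<gamma> w2 = 0" for \<alpha> \<beta> \<gamma>
  proof (rule ccontr)
    assume nz: "\<not> (\<alpha> = 0 \<and> \<beta> = 0 \<and> \<gamma> = 0)"
    define L where "L = ext UNIV (pt v) w1"
    have Lsub: "is_subspace UNIV L" unfolding L_def by (rule ext_sub[OF sf_UNIV pt_sub])
    have LsubK: "is_subspace K L" by (rule sub_UNIV_K[OF Lsub])
    have vL: "pt v \<subseteq> L" unfolding L_def by (rule ext_supset[OF sf_UNIV])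
    have w1L: "w1 \<in> L" unfolding L_def by (rule ext_w[OF sf_UNIV pt_sub])
    have w2L: "w2 \<in> L"
    proof (cases "\<gamma> = 0")
      case False
      have "smul \<gamma> w2 = - (smul \<alpha> v + smul \<beta> w1)" using dep by (simp add: add_eq_0_iff algebra_simps)
      hence "w2 = smul (inverse \<gamma>) (- (smul \<alpha> v + smul \<beta> w1))"
        using False by (metis smul_smul left_inverse smul_one)
      also have "\<dots> = smul (- inverse \<gamma> * \<alpha>) v + smul (- inverse \<gamma> * \<beta>) w1"
        by (simp add: smul_neg_r smul_add_r smul_smul smul_neg_l smul_diff_r)
      finally show ?thesis unfolding L_def using ext_mem[of "smul (- inverse \<gamma> * \<alpha>) v" "pt v" _ UNIV w1] pt_iff by blast
    next
      case True
      show ?thesis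
      proof (cases "\<beta> = 0")
        case False
        have "smul \<beta> w1 = - smul \<alpha> v" using dep True by (simp add: add_eq_0_iff algebra_simps)
        hence "w1 = smul (inverse \<beta>) (- smul \<alpha> v)" using False by (metis smul_smul left_inverse smul_one)
        also have "\<dots> = - smul (inverse \<beta> * \<alpha>) v" by (simp add: smul_neg_r smul_smul)
        also have "\<dots> = smul (- (inverse \<beta> * \<alpha>)) v" by (rule smul_neg_l[symmetric])
        finally have "w1 \<in> pt v" unfolding pt_iff by blast
        thus ?thesis using w1v by blast
      next
        case b0: True
        hence "\<alpha> \<noteq> 0" using nz True by blast
        moreover have "smul \<alpha> v = 0" using dep True b0 by simp
        ultimately show ?thesis using v(2) smul_eq_0 by blast
      qed
    qed
    have AL: "A \<subseteq> L" using vL unfolding A_def by blast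
    have A1L: "A1 \<subseteq> L" unfolding A1_def by (rule ext_le[OF LsubK AL w1L])
    have WL: "W \<subseteq> L" unfolding WA2 A2_def by (rule ext_le[OF LsubK A1L w2L])
    have Lline: "is_line L" unfolding L_def by (rule line_ext[OF v(2) w1v])
    have "linset W = linset L"
    proof
      show "linset W \<subseteq> linset L" unfolding linset_def using WL by blast
      show "linset L \<subseteq> linset W"
      proof
        fix Q assume "Q \<in> linset L"
        then obtain x where x: "x \<in> L" "x \<noteq> 0" "Q = pt x" unfolding linset_def by blast
        have "card L = CARD('a) * CARD('a)" unfolding L_def
          using ext_card[OF sf_UNIV pt_sub w1v] card_pt[OF v(2)] by simp
        moreover have "CARD('a) * CARD('a) < CARD('a vec3)"
        proof -
          have c2: "CARD('a \<times> 'a) = CARD('a) * CARD('a)"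
            using card_cartesian_product[of "UNIV::'a set" "UNIV::'a set"] by (simp add: UNIV_Times_UNIV)
          have c3: "CARD('a vec3) = CARD('a) * CARD('a \<times> 'a)"
            using card_cartesian_product[of "UNIV::'a set" "UNIV::('a \<times> 'a) set"] by (simp add: UNIV_Times_UNIV)
          have g: "CARD('a) \<ge> 2" by (rule card_ge2)
          have "CARD('a) * CARD('a) * 1 < CARD('a) * CARD('a) * CARD('a)"
            by (rule mult_strict_left_mono) (use g in simp_all)
          thus ?thesis using c2 c3 by (simp add: mult.assoc)
        qed
        ultimately have "L \<noteq> UNIV" by auto
        then obtain e where e: "e \<notin> L" by blast
        have xL: "pt x \<subseteq> L" unfolding pt_range using sub_smul[OF Lsub _ x(1)] by blast
        have ex: "e \<notin> pt x" using e xL by blast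
        define M where "M = ext UNIV (pt x) e"
        have "is_line M" unfolding M_def by (rule line_ext[OF x(2) ex])
        then obtain P' where P': "P' \<in> linset W" "P' \<subseteq> M" using blk unfolding blocking_set_def by blast
        then obtain y where y: "y \<in> W" "y \<noteq> 0" "P' = pt y" unfolding linset_def by blast
        have "y \<in> M" using P' y pt_self by blast
        then obtain a' c where ac: "a' \<in> pt x" "y = a' + smul c e" unfolding M_def ext_def by blast
        have "c = 0"
        proof (rule ccontr)
          assume c: "c \<noteq> 0"
          have "smul c e = y - a'" using ac by simp
          hence "e = smul (inverse c) (y - a')" using c by (metis smul_smul left_inverse smul_one)
          moreover have "y - a' \<in> L" using sub_diff[OF sf_UNIV Lsub] WL y(1) xL ac(1) by blast
          ultimately have "e \<in> L" using sub_smul[OF Lsub] by simp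
          thus False using e by blast
        qed
        hence "y = a'" using ac by simp
        then obtain a where a: "y = smul a x" using ac(1) unfolding pt_iff by blast
        hence "a \<noteq> 0" using y(2) by auto
        hence "pt y = pt x" using a pt_scale by simp
        thus "Q \<in> linset W" using P'(1) y x(3) by simp
      qed
    qed
    thus False using nl Lline by blast
  qed
  define \<mu> where "\<mu> = inverse l"
  define \<phi> where "\<phi> u = smul (\<mu> * (fst u - fst (snd u) * x0)) v + smul (fst (snd u)) w1 + smul (snd (snd u)) w2" for u :: "'a vec3"
  have \<phi>add: "\<phi> (u + u') = \<phi> u + \<phi> u'" for u u'
  proof -
    have e: "\<mu> * (fst u + fst u' - (fst (snd u) + fst (snd u')) * x0) = \<mu> * (fst u - fst (snd u) * x0) + \<mu> * (fst u' - fst (snd u') * x0)"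
      by (simp add: algebra_simps)
    show ?thesis unfolding \<phi>_def fst_add snd_add e smul_add_l by (simp only: add_ac)
  qed
  have \<phi>hom: "\<phi> (smul c u) = smul c (\<phi> u)" for c u
  proof -
    have e: "\<mu> * (fst (smul c u) - fst (snd (smul c u)) * x0) = c * (\<mu> * (fst u - fst (snd u) * x0))"
      by (simp add: smul_def algebra_simps)
    show ?thesis unfolding \<phi>_def e by (simp add: smul_add_r smul_smul) (simp add: smul_def)
  qed
  have \<phi>0: "u = 0" if "\<phi> u = 0" for u
  proof -
    have "\<mu> * (fst u - fst (snd u) * x0) = 0 \<and> fst (snd u) = 0 \<and> snd (snd u) = 0"
      using indep3 that unfolding \<phi>_def by blast
    moreover have "\<mu> \<noteq> 0" using l(1) by (simp add: \<mu>_def)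
    ultimately show ?thesis by (simp add: prod_eq_iff)
  qed
  have inj\<phi>: "inj \<phi>"
  proof (rule injI)
    fix u u' assume "\<phi> u = \<phi> u'"
    moreover have "\<phi> u = \<phi> (u - u') + \<phi> u'" using \<phi>add[of "u - u'" u'] by simp
    ultimately have "\<phi> (u - u') = 0" by simp
    hence "u - u' = 0" by (rule \<phi>0)
    thus "u = u'" by simp
  qed
  have surj\<phi>: "surj \<phi>" using inj\<phi> by (simp add: finite_UNIV_inj_surj)
  have \<phi>U: "\<phi> ` U_trace q s = W"
  proof
    show "\<phi> ` U_trace q s \<subseteq> W"
    proof
      fix w assume "w \<in> \<phi> ` U_trace q s"
      then obtain x y where xy: "y \<in> K" "w = \<phi> (x, Tr x, y)" unfolding U_trace_def by blast
      define z where "z = \<mu> * (x - Tr x * x0)"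
      have "l * z = x - Tr x * x0" using l(1) by (simp add: z_def \<mu>_def)
      hence "Tr (l * z) = 0" using tr_diff tr_smul[OF tr_K] x0 by simp
      hence "z \<in> S" using l(2) by simp
      hence "smul z v \<in> A" unfolding A_def S_def using pt_iff by blast
      moreover have "w = smul z v + smul (Tr x) w1 + smul y w2" using xy unfolding \<phi>_def z_def by simp
      ultimately show "w \<in> W" using Wmem tr_K xy(1) by simp
    qed
    show "W \<subseteq> \<phi> ` U_trace q s"
    proof
      fix w assume "w \<in> W"
      then obtain a b c where abc: "a \<in> A" "b \<in> K" "c \<in> K" "w = a + smul b w1 + smul c w2" using Wrep by blast
      hence "a \<in> pt v" unfolding A_def by auto
      then obtain z where z: "a = smul z v" using pt_iff by blast
      have "z \<in> S" using abc(1) z unfolding A_def S_def by simp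
      hence tz: "Tr (l * z) = 0" using l(2) by simp
      define x where "x = l * z + b * x0"
      have tx: "Tr x = b" unfolding x_def using tz tr_add tr_smul[OF abc(2)] x0 by simp
      have "x - Tr x * x0 = l * z" unfolding tx by (simp add: x_def)
      hence "\<mu> * (x - Tr x * x0) = z" unfolding \<mu>_def using l(1) by (simp add: mult.assoc[symmetric])
      hence "\<phi> (x, Tr x, c) = w" unfolding \<phi>_def using abc(4) z tx by simp
      moreover have "(x, Tr x, c) \<in> U_trace q s" unfolding U_trace_def using abc(3) by blast
      ultimately show "w \<in> \<phi> ` U_trace q s" by blast
    qed
  qed
  define ff where "ff = inv_into UNIV \<phi>"
  have "bij \<phi>" using inj\<phi> surj\<phi> by (rule bijI)
  hence bijf: "bij ff" unfolding ff_def by (rule bij_imp_bij_inv)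
  have \<phi>ff: "\<phi> (ff y) = y" for y unfolding ff_def using surj\<phi> by (simp add: surj_f_inv_f)
  have fadd: "ff (u + u') = ff u + ff u'" for u u'
  proof -
    have "\<phi> (ff (u + u')) = \<phi> (ff u + ff u')" unfolding \<phi>add \<phi>ff ..
    thus ?thesis using inj\<phi> by (simp add: inj_eq)
  qed
  have fhom: "ff (smul c u) = smul c (ff u)" for c u
  proof -
    have "\<phi> (ff (smul c u)) = \<phi> (smul c (ff u))" unfolding \<phi>hom \<phi>ff ..
    thus ?thesis using inj\<phi> by (simp add: inj_eq)
  qed
  have fW: "ff ` W = U_trace q s"
    unfolding \<phi>U[symmetric] image_image ff_def using inj\<phi> by simp
  have "(\<lambda>P. ff ` P) ` linset W = linset (ff ` W)"
    by (rule linset_map[OF bij_is_inj[OF bijf] fadd fhom])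
  thus ?thesis unfolding proj_equiv_def fW using bijf fadd fhom by blast
qed

end

theorem proposition2p5:
  fixes W :: "'a::{field,finite} vec3 set" and q s :: nat
  assumes "\<exists>p k. prime p \<and> k \<ge> 1 \<and> q = p ^ k"
    and "s \<ge> 2"
    and "CARD('a) = q ^ s"
    and "is_subspace (subfield_q q) W"
    and "sub_dim (subfield_q q) W = s + 1"
    and "blocking_set (linset W)"
    and "\<not> (\<exists>l. is_line l \<and> linset W = linset l)"
    and "\<exists>P\<in>linset W. weight (subfield_q q) W P = s - 1"
  shows "proj_equiv (linset W) (linset (U_trace q s))"
proof -
  obtain p k where pk: "prime p" "k \<ge> 1" "q = p ^ k" using assms(1) by blast
  have qc: "q = CHAR('a) ^ k" using char_q[OF pk(1) pk(3) assms(3)] assms(2) by simp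
  interpret ffs q s k "TYPE('a)"
    by unfold_locales (use qc pk assms(2,3) in auto)
  show ?thesis by (rule main[OF assms(4-8)])
qed

end
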